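(* Let $\phi_1,\phi_2$ be as in the context and let $\det J=\phi_{1,x}\phi_{2,y}-\phi_{1,y}\phi_{2,x}$ (assumed invertible as a formal series). Then $\phi_1,\phi_2$ satisfy the pre-reduced hierarchy $\big((\det J)^{-1}\,\Phi_1\wedge\Phi_2\big)_-=0$ if and only if for all $n,j\ge1$ $$\partial_{t_n}\vec\phi=\left(\Big((\det J)^{-1}\begin{vmatrix}\phi_{1,t_n}&\phi_{2,t_n}\\ \phi_{1,y}&\phi_{2,y}\end{vmatrix}\Big)_+\partial_x+\Big((\det J)^{-1}\begin{vmatrix}\phi_{2,t_n}&\phi_{1,t_n}\\ \phi_{2,x}&\phi_{1,x}\end{vmatrix}\Big)_+\partial_y\right)\vec\phi,$$ $$\lambda\partial_{z_j}\vec\phi=\left(\Big((\det J)^{-1}\begin{vmatrix}\lambda\phi_{1,z_j}&\lambda\phi_{2,z_j}\\ \phi_{1,y}&\phi_{2,y}\end{vmatrix}\Big)_+\partial_x+\Big((\det J)^{-1}\begin{vmatrix}\lambda\phi_{2,z_j}&\lambda\phi_{1,z_j}\\ \phi_{2,x}&\phi_{1,x}\end{vmatrix}\Big)_+\partial_y\right)\vec\phi.$$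
   Context: Independent variables are $x,y$ and two infinite families $t_1,t_2,\dots$ and $z_1,z_2,\dots$. $\lambda$ is a formal spectral parameter; for a formal Laurent series, $(\cdot)_+$ is the part with nonnegative powers of $\lambda$ and $(\cdot)_-$ the part with negative powers. Consider formal series $\phi_1=-y+\sum_{j\ge2}z_j\lambda^{j-1}+\sum_{k\ge1}g_k\lambda^{-k}$, $\phi_2=x+t_1\lambda+\sum_{n\ge2}t_n\lambda^n+\sum_{m\ge1}f_m\lambda^{-m}$, with $g_k,f_m$ functions of $(x,y,t_1,t_2,\dots,z_1,z_2,\dots)$; $\vec\phi=(\phi_1,\phi_2)^T$ and vector fields act componentwise. Define $\Phi_i=\phi_{i,x}dx+\phi_{i,y}dy+\sum_{n\ge1}\phi_{i,t_n}dt_n+\lambda\sum_{j\ge1}\phi_{i,z_j}dz_j$. The condition $\big((\det J)^{-1}\Phi_1\wedge\Phi_2\big)_-=0$ means: for every pair of variables $a,b$ among $x,y,t_n,z_j$, the negative-power part of $(\det J)^{-1}\lambda^{\epsilon}(\phi_{1,a}\phi_{2,b}-\phi_{1,b}\phi_{2,a})$ vanishes, where $\epsilon$ is the number of $z$-variables among $a,b$. Subscripts denote partial derivatives. *)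

theory Defs
  imports "HOL-Analysis.Analysis" "HOL-Computational_Algebra.Formal_Laurent_Series"
begin

text \<open>A point of the (infinite-dimensional) space of independent variables is a map
  var \<Rightarrow> real; coefficient functions are real functions of such points.\<close>

datatype var = VX | VY | VT nat | VZ nat

definition valid_var :: "var \<Rightarrow> bool" where
  "valid_var v = (case v of VT n \<Rightarrow> n \<ge> 1 | VZ j \<Rightarrow> j \<ge> 1 | _ \<Rightarrow> True)"

definition pd :: "var \<Rightarrow> ((var \<Rightarrow> real) \<Rightarrow> real) \<Rightarrow> (var \<Rightarrow> real) \<Rightarrow> real" where
  "pd v F p = deriv (\<lambda>s. F (p(v := s))) (p v)"

text \<open>Formal series in the spectral parameter lambda that have only finitely many
  positive powers of lambda are represented as formal Laurent series (type real fls)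
  in the variable mu = lambda^-1: the coefficient of lambda^e is the coefficient of mu^(-e).\<close>

abbreviation lam :: "real fls" where "lam \<equiv> fls_X_inv"

text \<open>(.)_+ : nonnegative powers of lambda;  (.)_- : negative powers of lambda.\<close>
definition lplus :: "real fls \<Rightarrow> real fls" where
  "lplus F = Abs_fls (\<lambda>m. if m \<le> 0 then fls_nth F m else 0)"

definition lminus :: "real fls \<Rightarrow> real fls" where
  "lminus F = Abs_fls (\<lambda>m. if m > 0 then fls_nth F m else 0)"

text \<open>sum_{k \<ge> 1} (\<partial>_v h_k)(p) lambda^-k, for coefficient functions h_k (index k \<ge> 1).\<close>
definition tail_d :: "(nat \<Rightarrow> (var \<Rightarrow> real) \<Rightarrow> real) \<Rightarrow> var \<Rightarrow> (var \<Rightarrow> real) \<Rightarrow> real fls" where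
  "tail_d h v p = fls_X * fps_to_fls (Abs_fps (\<lambda>k. pd v (h (Suc k)) p))"

text \<open>phi_1 = -y + sum_{j\<ge>2} z_j lambda^(j-1) + sum_{k\<ge>1} g_k lambda^-k : its partial derivative
  with respect to v (termwise), at the point p.\<close>
definition dphi1 :: "(nat \<Rightarrow> (var \<Rightarrow> real) \<Rightarrow> real) \<Rightarrow> var \<Rightarrow> (var \<Rightarrow> real) \<Rightarrow> real fls" where
  "dphi1 g v p =
     (case v of VY \<Rightarrow> -1 | VZ j \<Rightarrow> (if j \<ge> 2 then lam ^ (j - 1) else 0) | _ \<Rightarrow> 0)
     + tail_d g v p"

text \<open>phi_2 = x + t_1 lambda + sum_{n\<ge>2} t_n lambda^n + sum_{m\<ge>1} f_m lambda^-m : its partial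
  derivative with respect to v (termwise), at the point p.\<close>
definition dphi2 :: "(nat \<Rightarrow> (var \<Rightarrow> real) \<Rightarrow> real) \<Rightarrow> var \<Rightarrow> (var \<Rightarrow> real) \<Rightarrow> real fls" where
  "dphi2 f v p =
     (case v of VX \<Rightarrow> 1 | VT n \<Rightarrow> (if n \<ge> 1 then lam ^ n else 0) | _ \<Rightarrow> 0)
     + tail_d f v p"

definition dphi :: "(nat \<Rightarrow> (var \<Rightarrow> real) \<Rightarrow> real) \<Rightarrow> (nat \<Rightarrow> (var \<Rightarrow> real) \<Rightarrow> real)
                    \<Rightarrow> nat \<Rightarrow> var \<Rightarrow> (var \<Rightarrow> real) \<Rightarrow> real fls" where
  "dphi g f i v p = (if i = 1 then dphi1 g v p else dphi2 f v p)"

definition detJ :: "(nat \<Rightarrow> (var \<Rightarrow> real) \<Rightarrow> real) \<Rightarrow> (nat \<Rightarrow> (var \<Rightarrow> real) \<Rightarrow> real)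
                    \<Rightarrow> (var \<Rightarrow> real) \<Rightarrow> real fls" where
  "detJ g f p = dphi1 g VX p * dphi2 f VY p - dphi1 g VY p * dphi2 f VX p"

definition eps :: "var \<Rightarrow> nat" where
  "eps v = (case v of VZ _ \<Rightarrow> 1 | _ \<Rightarrow> 0)"

definition pre_reduced :: "(nat \<Rightarrow> (var \<Rightarrow> real) \<Rightarrow> real) \<Rightarrow> (nat \<Rightarrow> (var \<Rightarrow> real) \<Rightarrow> real) \<Rightarrow> bool" where
  "pre_reduced g f \<longleftrightarrow>
     (\<forall>p a b. valid_var a \<longrightarrow> valid_var b \<longrightarrow>
        lminus (inverse (detJ g f p) * lam ^ (eps a + eps b) *
                (dphi1 g a p * dphi2 f b p - dphi1 g b p * dphi2 f a p)) = 0)"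

end

theory Submission
  imports Defs
begin
notation fls_nth (infixl \<open>$$\<close> 75)

lemma lminus_nth: "lminus F $$ m = (if m > 0 then F $$ m else 0)"
  unfolding lminus_def by (rule nth_Abs_fls_lower_bound[of 0]) auto

lemma lplus_nth: "lplus F $$ m = (if m \<le> 0 then F $$ m else 0)"
  unfolding lplus_def
proof (rule nth_Abs_fls)
  show "\<forall>\<^sub>\<infinity>n. (if - int n \<le> 0 then F $$ (- int n) else 0) = 0"
    using MOST_fls_neg_nth_eq_0[of F] by (auto elim!: MOST_mono)
qed

lemma lplus_lminus: "F = lplus F + lminus F"
  by (rule fls_eqI) (simp add: lplus_nth lminus_nth)

lemma lminus_zero_iff: "lminus F = 0 \<longleftrightarrow> (\<forall>m>0. F $$ m = 0)"
  by (auto simp: fls_eq_iff lminus_nth)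

lemma lminus_lplus: "lminus (lplus F) = 0"
  by (simp add: lminus_zero_iff lplus_nth)

lemma lplus_id: "lminus F = 0 \<Longrightarrow> lplus F = F"
  using lplus_lminus[of F] by simp

lemma lminus_mult: assumes "lminus F = 0" "lminus G = 0" shows "lminus (F*G) = 0"
proof -
  have "(F*G) $$ n = 0" if "n > 0" for n
  proof -
    have "(F*G) $$ n = (\<Sum>i=fls_subdegree F..n - fls_subdegree G. F $$ i * G $$ (n - i))"
      by (rule fls_times_nth(2))
    also have "\<dots> = 0"
    proof (rule sum.neutral, rule ballI)
      fix i assume "i \<in> {fls_subdegree F..n - fls_subdegree G}"
      show "F $$ i * G $$ (n - i) = 0"
      proof (cases "i > 0")
        case True then show ?thesis using assms(1) by (simp add: lminus_zero_iff)
      next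
        case False then have "n - i > 0" using that by simp
        then show ?thesis using assms(2) by (simp add: lminus_zero_iff)
      qed
    qed
    finally show ?thesis .
  qed
  then show ?thesis by (simp add: lminus_zero_iff)
qed

lemma lminus_diff: "lminus F = 0 \<Longrightarrow> lminus G = 0 \<Longrightarrow> lminus (F - G) = 0"
  by (simp add: lminus_zero_iff)

definition negp :: "real fls \<Rightarrow> bool" where "negp S = (\<forall>m\<le>0. S $$ m = 0)"

lemma negp_mult: assumes "negp a" "negp b" shows "negp (a*b)"
proof -
  have "(a*b) $$ n = 0" if "n \<le> 0" for n
  proof -
    have "(a*b) $$ n = (\<Sum>i=fls_subdegree a..n - fls_subdegree b. a $$ i * b $$ (n - i))"
      by (rule fls_times_nth(2))
    also have "\<dots> = 0"
    proof (rule sum.neutral, rule ballI)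
      fix i assume "i \<in> {fls_subdegree a..n - fls_subdegree b}"
      show "a $$ i * b $$ (n - i) = 0"
      proof (cases "i > 0")
        case False then show ?thesis using assms(1) by (simp add: negp_def)
      next
        case True then have "n - i \<le> 0" using that by simp
        then show ?thesis using assms(2) by (simp add: negp_def)
      qed
    qed
    finally show ?thesis .
  qed
  then show ?thesis by (simp add: negp_def)
qed

lemma negp_tail: "negp (tail_d h v p)"
  by (simp add: negp_def tail_d_def fls_X_times_conv_shift)

lemma detJ_ne0: "detJ g f p \<noteq> 0"
proof -
  let ?a = "tail_d g VX p" and ?b = "tail_d f VY p" and ?c = "tail_d g VY p" and ?d = "tail_d f VX p"
  have D: "detJ g f p = 1 + (?a * ?b + ?d - ?c - ?c * ?d)"
    by (simp add: detJ_def dphi1_def dphi2_def algebra_simps)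
  have "negp (?a * ?b)" "negp (?c * ?d)" by (simp_all add: negp_mult negp_tail)
  then have "(?a * ?b + ?d - ?c - ?c * ?d) $$ 0 = 0"
    using negp_tail[of f VX p] negp_tail[of g VY p] by (simp add: negp_def)
  then have "detJ g f p $$ 0 = 1" by (simp add: D)
  then show ?thesis by auto
qed

lemma rep:
  fixes X1 X2 Y1 Y2 V1 V2 D :: "real fls"
  assumes D: "D = X1 * Y2 - Y1 * X2" "D \<noteq> 0"
  defines "\<alpha> \<equiv> inverse D * (V1 * Y2 - V2 * Y1)" and "\<beta> \<equiv> inverse D * (V2 * X1 - V1 * X2)"
  shows "(V1 = lplus \<alpha> * X1 + lplus \<beta> * Y1 \<and> V2 = lplus \<alpha> * X2 + lplus \<beta> * Y2)
         \<longleftrightarrow> lminus \<alpha> = 0 \<and> lminus \<beta> = 0"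
proof -
  have "\<alpha> * X1 + \<beta> * Y1 = inverse D * (V1 * D)" "\<alpha> * X2 + \<beta> * Y2 = inverse D * (V2 * D)"
    unfolding \<alpha>_def \<beta>_def D(1) by (simp_all add: algebra_simps)
  then have c1: "V1 = \<alpha> * X1 + \<beta> * Y1" and c2: "V2 = \<alpha> * X2 + \<beta> * Y2"
    using D(2) by simp_all
  show ?thesis
  proof
    assume h: "V1 = lplus \<alpha> * X1 + lplus \<beta> * Y1 \<and> V2 = lplus \<alpha> * X2 + lplus \<beta> * Y2"
    have e1: "lminus \<alpha> * X1 + lminus \<beta> * Y1 = 0"
      using c1 h lplus_lminus[of \<alpha>] lplus_lminus[of \<beta>]
      by (metis (no_types, lifting) add_diff_cancel_left' add_diff_eq diff_add_eq diff_self distrib_right)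
    have e2: "lminus \<alpha> * X2 + lminus \<beta> * Y2 = 0"
      using c2 h lplus_lminus[of \<alpha>] lplus_lminus[of \<beta>]
      by (metis (no_types, lifting) add_diff_cancel_left' add_diff_eq diff_add_eq diff_self distrib_right)
    have "lminus \<alpha> * D = (lminus \<alpha> * X1 + lminus \<beta> * Y1) * Y2 - (lminus \<alpha> * X2 + lminus \<beta> * Y2) * Y1"
      by (simp add: D(1) algebra_simps)
    then have "lminus \<alpha> * D = 0" using e1 e2 by simp
    moreover have "lminus \<beta> * D = (lminus \<alpha> * X2 + lminus \<beta> * Y2) * X1 - (lminus \<alpha> * X1 + lminus \<beta> * Y1) * X2"
      by (simp add: D(1) algebra_simps)
    then have "lminus \<beta> * D = 0" using e1 e2 by simp
    ultimately show "lminus \<alpha> = 0 \<and> lminus \<beta> = 0" using D(2) by simp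
  next
    assume "lminus \<alpha> = 0 \<and> lminus \<beta> = 0"
    then show "V1 = lplus \<alpha> * X1 + lplus \<beta> * Y1 \<and> V2 = lplus \<alpha> * X2 + lplus \<beta> * Y2"
      using c1 c2 by (simp add: lplus_id)
  qed
qed

lemma allcong: "(\<And>p. P p = Q p) \<Longrightarrow> (\<forall>p. P p) = (\<forall>p. Q p)" by simp

lemma point:
  fixes P :: "nat \<Rightarrow> var \<Rightarrow> real fls"
  defines "D \<equiv> P 1 VX * P 2 VY - P 1 VY * P 2 VX"
  assumes D0: "D \<noteq> 0"
  shows "(\<forall>a b. valid_var a \<longrightarrow> valid_var b \<longrightarrow>
        lminus (inverse D * lam ^ (eps a + eps b) * (P 1 a * P 2 b - P 1 b * P 2 a)) = 0)
    \<longleftrightarrow> (\<forall>n j. n \<ge> 1 \<longrightarrow> j \<ge> 1 \<longrightarrow>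
       (\<forall>i\<in>{1::nat, 2}.
          P i (VT n) =
            lplus (inverse D * (P 1 (VT n) * P 2 VY - P 2 (VT n) * P 1 VY)) * P i VX
          + lplus (inverse D * (P 2 (VT n) * P 1 VX - P 1 (VT n) * P 2 VX)) * P i VY
        \<and>
          lam * P i (VZ j) =
            lplus (inverse D * (lam * P 1 (VZ j) * P 2 VY - lam * P 2 (VZ j) * P 1 VY)) * P i VX
          + lplus (inverse D * (lam * P 2 (VZ j) * P 1 VX - lam * P 1 (VZ j) * P 2 VX)) * P i VY))"
    (is "?L \<longleftrightarrow> ?R")
proof -
  define W where "W a b = inverse D * lam ^ (eps a + eps b) * (P 1 a * P 2 b - P 1 b * P 2 a)" for a b
  have Dd: "D = P 1 VX * P 2 VY - P 1 VY * P 2 VX" by (simp add: D_def)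
  note R = rep[OF Dd D0]
  have eqT: "(\<forall>i\<in>{1::nat, 2}.
          P i (VT n) =
            lplus (inverse D * (P 1 (VT n) * P 2 VY - P 2 (VT n) * P 1 VY)) * P i VX
          + lplus (inverse D * (P 2 (VT n) * P 1 VX - P 1 (VT n) * P 2 VX)) * P i VY)
        \<longleftrightarrow> lminus (W (VT n) VY) = 0 \<and> lminus (W VX (VT n)) = 0" for n
  proof -
    have "W (VT n) VY = inverse D * (P 1 (VT n) * P 2 VY - P 2 (VT n) * P 1 VY)"
      "W VX (VT n) = inverse D * (P 2 (VT n) * P 1 VX - P 1 (VT n) * P 2 VX)"
      by (simp_all add: W_def eps_def algebra_simps)
    then show ?thesis using R[of "P 1 (VT n)" "P 2 (VT n)"] by simp
  qed
  have eqZ: "(\<forall>i\<in>{1::nat, 2}.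
          lam * P i (VZ j) =
            lplus (inverse D * (lam * P 1 (VZ j) * P 2 VY - lam * P 2 (VZ j) * P 1 VY)) * P i VX
          + lplus (inverse D * (lam * P 2 (VZ j) * P 1 VX - lam * P 1 (VZ j) * P 2 VX)) * P i VY)
        \<longleftrightarrow> lminus (W (VZ j) VY) = 0 \<and> lminus (W VX (VZ j)) = 0" for j
  proof -
    have "W (VZ j) VY = inverse D * (lam * P 1 (VZ j) * P 2 VY - lam * P 2 (VZ j) * P 1 VY)"
      "W VX (VZ j) = inverse D * (lam * P 2 (VZ j) * P 1 VX - lam * P 1 (VZ j) * P 2 VX)"
      by (simp_all add: W_def eps_def algebra_simps)
    then show ?thesis using R[of "lam * P 1 (VZ j)" "lam * P 2 (VZ j)"] by simp
  qed
  have R': "?R \<longleftrightarrow> (\<forall>n j. n \<ge> 1 \<longrightarrow> j \<ge> 1 \<longrightarrow>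
      (lminus (W (VT n) VY) = 0 \<and> lminus (W VX (VT n)) = 0) \<and>
      (lminus (W (VZ j) VY) = 0 \<and> lminus (W VX (VZ j)) = 0))"
    using eqT eqZ by (simp add: ball_conj_distrib)
  show ?thesis
  proof
    assume L: ?L
    show ?R unfolding R' using L by (simp add: W_def valid_var_def)
  next
    assume ?R
    then have H: "lminus (W (VT n) VY) = 0" "lminus (W VX (VT n)) = 0"
       "lminus (W (VZ n) VY) = 0" "lminus (W VX (VZ n)) = 0" if "n \<ge> 1" for n
      unfolding R' using that by blast+
    have ex: "\<exists>\<alpha> \<beta>. lminus \<alpha> = 0 \<and> lminus \<beta> = 0 \<and>
        lam ^ eps a * P 1 a = \<alpha> * P 1 VX + \<beta> * P 1 VY \<and>
        lam ^ eps a * P 2 a = \<alpha> * P 2 VX + \<beta> * P 2 VY" if "valid_var a" for a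
    proof (cases a)
      case VX then show ?thesis
        by (intro exI[of _ 1] exI[of _ 0]) (simp add: eps_def lminus_zero_iff)
    next
      case VY then show ?thesis
        by (intro exI[of _ 0] exI[of _ 1]) (simp add: eps_def lminus_zero_iff)
    next
      case (VT n)
      then have n: "n \<ge> 1" using that by (simp add: valid_var_def)
      have "(\<forall>i\<in>{1::nat, 2}.
          P i (VT n) =
            lplus (inverse D * (P 1 (VT n) * P 2 VY - P 2 (VT n) * P 1 VY)) * P i VX
          + lplus (inverse D * (P 2 (VT n) * P 1 VX - P 1 (VT n) * P 2 VX)) * P i VY)"
        using eqT H(1,2)[OF n] by blast
      then show ?thesis using VT
        by (intro exI[of _ "lplus (inverse D * (P 1 (VT n) * P 2 VY - P 2 (VT n) * P 1 VY))"]
             exI[of _ "lplus (inverse D * (P 2 (VT n) * P 1 VX - P 1 (VT n) * P 2 VX))"])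
           (simp add: eps_def lminus_lplus)
    next
      case (VZ n)
      then have n: "n \<ge> 1" using that by (simp add: valid_var_def)
      have "(\<forall>i\<in>{1::nat, 2}.
          lam * P i (VZ n) =
            lplus (inverse D * (lam * P 1 (VZ n) * P 2 VY - lam * P 2 (VZ n) * P 1 VY)) * P i VX
          + lplus (inverse D * (lam * P 2 (VZ n) * P 1 VX - lam * P 1 (VZ n) * P 2 VX)) * P i VY)"
        using eqZ H(3,4)[OF n] by blast
      then show ?thesis using VZ
        by (intro exI[of _ "lplus (inverse D * (lam * P 1 (VZ n) * P 2 VY - lam * P 2 (VZ n) * P 1 VY))"]
             exI[of _ "lplus (inverse D * (lam * P 2 (VZ n) * P 1 VX - lam * P 1 (VZ n) * P 2 VX))"])
           (simp add: eps_def lminus_lplus)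
    qed
    show ?L
    proof (intro allI impI)
      fix a b assume va: "valid_var a" and vb: "valid_var b"
      obtain \<alpha>a \<beta>a where A: "lminus \<alpha>a = 0" "lminus \<beta>a = 0"
        "lam ^ eps a * P 1 a = \<alpha>a * P 1 VX + \<beta>a * P 1 VY"
        "lam ^ eps a * P 2 a = \<alpha>a * P 2 VX + \<beta>a * P 2 VY" using ex[OF va] by blast
      obtain \<alpha>b \<beta>b where B: "lminus \<alpha>b = 0" "lminus \<beta>b = 0"
        "lam ^ eps b * P 1 b = \<alpha>b * P 1 VX + \<beta>b * P 1 VY"
        "lam ^ eps b * P 2 b = \<alpha>b * P 2 VX + \<beta>b * P 2 VY" using ex[OF vb] by blast
      have "lam ^ (eps a + eps b) * (P 1 a * P 2 b - P 1 b * P 2 a)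
          = (lam ^ eps a * P 1 a) * (lam ^ eps b * P 2 b) - (lam ^ eps b * P 1 b) * (lam ^ eps a * P 2 a)"
        by (simp add: power_add algebra_simps)
      also have "\<dots> = (\<alpha>a * \<beta>b - \<alpha>b * \<beta>a) * D"
        unfolding A(3,4) B(3,4) Dd by (simp add: algebra_simps)
      finally have "inverse D * lam ^ (eps a + eps b) * (P 1 a * P 2 b - P 1 b * P 2 a)
          = \<alpha>a * \<beta>b - \<alpha>b * \<beta>a" using D0 by (simp add: mult.assoc)
      then show "lminus (inverse D * lam ^ (eps a + eps b) * (P 1 a * P 2 b - P 1 b * P 2 a)) = 0"
        using A B by (simp add: lminus_diff lminus_mult)
    qed
  qed
qed

theorem theorem4p1:
  fixes g f :: "nat \<Rightarrow> (var \<Rightarrow> real) \<Rightarrow> real"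
  shows "pre_reduced g f \<longleftrightarrow>
    (\<forall>p n j. n \<ge> 1 \<longrightarrow> j \<ge> 1 \<longrightarrow>
       (\<forall>i\<in>{1::nat, 2}.
          dphi g f i (VT n) p =
            lplus (inverse (detJ g f p) *
                   (dphi1 g (VT n) p * dphi2 f VY p - dphi2 f (VT n) p * dphi1 g VY p))
              * dphi g f i VX p
          + lplus (inverse (detJ g f p) *
                   (dphi2 f (VT n) p * dphi1 g VX p - dphi1 g (VT n) p * dphi2 f VX p))
              * dphi g f i VY p
        \<and>
          lam * dphi g f i (VZ j) p =
            lplus (inverse (detJ g f p) *
                   (lam * dphi1 g (VZ j) p * dphi2 f VY p - lam * dphi2 f (VZ j) p * dphi1 g VY p))
              * dphi g f i VX p
          + lplus (inverse (detJ g f p) *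
                   (lam * dphi2 f (VZ j) p * dphi1 g VX p - lam * dphi1 g (VZ j) p * dphi2 f VX p))
              * dphi g f i VY p))"
unfolding pre_reduced_def
proof (rule allcong, goal_cases)
  case (1 p)
  have d1: "dphi g f 1 v p = dphi1 g v p" and d2: "dphi g f 2 v p = dphi2 f v p" for v
    by (simp_all add: dphi_def)
  have D0: "dphi1 g VX p * dphi2 f VY p - dphi1 g VY p * dphi2 f VX p \<noteq> 0"
    using detJ_ne0[of g f p] unfolding detJ_def .
  note pt = point[of "\<lambda>i v. dphi g f i v p", unfolded d1 d2, OF D0]
  show ?case using pt unfolding detJ_def by blast
qed

end
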